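(* Assume $f$ has a unique global maximizer $g$ and the problem contains no weak epistasis. Then for every $v\in V$, $\mathcal C(\mathcal M_{SO}(v))=\mathcal{IN}^*(v)$; consequently the minimum stationary optimum of $v$ is unique and equals $\{(u,g[u]):u\in\mathcal{IN}^*(v)\}$.
   Context: Fix $\ell\ge1$, loci $V=\{0,\dots,\ell-1\}$, chromosomes $\vec y\in\{0,1\}^V$, fitness $f:\{0,1\}^V\to\mathbb R$ (maximized) with unique global maximizer $g$. An assignment $A$ is a set of pairs $(v,a)$ ($v\in V$, $a\in\{0,1\}$) with at most one pair per locus; $A[v]=a$ if $(v,a)\in A$, else $A[v]=*$; coverage $\mathcal C(A)=\{v:A[v]\ne*\}$. $\Psi_A$ (constrained optima) is the set of chromosomes agreeing with $A$ on $\mathcal C(A)$ with maximum fitness among such chromosomes; $\Psi_A[v]=\{\psi_v:\psi\in\Psi_A\}$. For full assignments $B$, $f(B)$ is the fitness of the corresponding chromosome. Epistasis: for $v\in V$ and nonempty $S\subseteq V\setminus\{v\}$, $S\Rightarrow v$ iff for every $s\in S$ there exists an assignment $A$ with $\mathcal C(A)=S$ and $\Psi_A[v]\neq\Psi_{A\setminus\{(s,A[s])\}}[v]$; the empty set is never epistatic. An epistasis $S\Rightarrow v$ with $|S|\ge2$ is weak if no nonempty proper subset $T\subsetneq S$ has $T\Rightarrow v$; "no weak epistasis" means no epistasis is weak. The epistatic graph (EG) is the directed graph on $V$ with an edge $u\to v$ iff $\{u\}\Rightarrow v$. $\mathcal{IN}^0(v)=\{v\}$, $\mathcal{IN}^i(v)=\{u:\exists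 w\in\mathcal{IN}^{i-1}(v),\ \{u\}\Rightarrow w\}$ for $i\ge1$, $\mathcal{IN}^*(v)=\bigcup_{i=0}^{\ell-1}\mathcal{IN}^i(v)$. A stationary optimum is a nonempty assignment $A$ such that for every assignment $A'\neq A$ with $\mathcal C(A')=\mathcal C(A)$ and every assignment $R$ with $\mathcal C(R)=V\setminus\mathcal C(A)$, $f(A\cup R)>f(A'\cup R)$. The minimum stationary optimum $\mathcal M_{SO}(v)$ of locus $v$ is a stationary optimum $A$ with $v\in\mathcal C(A)$ of minimum size. *)

theory Defs
  imports Complex_Main
begin

text \<open>An assignment is a partial map from loci to bits
  (at most one value per locus); its coverage is its domain.
  The fitness f is a real-valued function; only its values on chromosomes matter.\<close>

type_synonym assignment = "nat \<rightharpoonup> bool"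

definition loci :: "nat \<Rightarrow> nat set" where
  "loci l = {..<l}"

definition chroms :: "nat \<Rightarrow> assignment set" where
  "chroms l = {y. dom y = loci l}"

definition is_assignment :: "nat \<Rightarrow> assignment \<Rightarrow> bool" where
  "is_assignment l A \<longleftrightarrow> dom A \<subseteq> loci l"

definition Psi :: "nat \<Rightarrow> (assignment \<Rightarrow> real) \<Rightarrow> assignment \<Rightarrow> assignment set" where
  "Psi l f A = {y \<in> chroms l. A \<subseteq>\<^sub>m y \<and> (\<forall>z \<in> chroms l. A \<subseteq>\<^sub>m z \<longrightarrow> f z \<le> f y)}"

definition Psi_at :: "nat \<Rightarrow> (assignment \<Rightarrow> real) \<Rightarrow> assignment \<Rightarrow> nat \<Rightarrow> bool set" where
  "Psi_at l f A v = {the (y v) | y. y \<in> Psi l f A}"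

text \<open>Epistasis S \<Rightarrow> v. Removing the pair (s, A[s]) from A is A(s := None).\<close>
definition epistatic :: "nat \<Rightarrow> (assignment \<Rightarrow> real) \<Rightarrow> nat set \<Rightarrow> nat \<Rightarrow> bool" where
  "epistatic l f S v \<longleftrightarrow>
     v \<in> loci l \<and> S \<noteq> {} \<and> S \<subseteq> loci l - {v} \<and>
     (\<forall>s \<in> S. \<exists>A. dom A = S \<and> Psi_at l f A v \<noteq> Psi_at l f (A(s := None)) v)"

definition weak_epistasis :: "nat \<Rightarrow> (assignment \<Rightarrow> real) \<Rightarrow> nat set \<Rightarrow> nat \<Rightarrow> bool" where
  "weak_epistasis l f S v \<longleftrightarrow>
     epistatic l f S v \<and> card S \<ge> 2 \<and> \<not> (\<exists>T. T \<noteq> {} \<and> T \<subset> S \<and> epistatic l f T v)"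

definition no_weak_epistasis :: "nat \<Rightarrow> (assignment \<Rightarrow> real) \<Rightarrow> bool" where
  "no_weak_epistasis l f \<longleftrightarrow> (\<forall>S v. \<not> weak_epistasis l f S v)"

text \<open>IN^i(v) in the epistatic graph (edge u -> w iff {u} => w).\<close>
fun IN :: "nat \<Rightarrow> (assignment \<Rightarrow> real) \<Rightarrow> nat \<Rightarrow> nat \<Rightarrow> nat set" where
  "IN l f 0 v = {v}"
| "IN l f (Suc i) v = {u. \<exists>w \<in> IN l f i v. epistatic l f {u} w}"

definition IN_star :: "nat \<Rightarrow> (assignment \<Rightarrow> real) \<Rightarrow> nat \<Rightarrow> nat set" where
  "IN_star l f v = (\<Union>i \<in> {..<l}. IN l f i v)"

definition stationary_optimum :: "nat \<Rightarrow> (assignment \<Rightarrow> real) \<Rightarrow> assignment \<Rightarrow> bool" where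
  "stationary_optimum l f A \<longleftrightarrow>
     is_assignment l A \<and> dom A \<noteq> {} \<and>
     (\<forall>A' R. A' \<noteq> A \<and> dom A' = dom A \<and> dom R = loci l - dom A \<longrightarrow>
        f (R ++ A') < f (R ++ A))"

definition min_stationary_optimum :: "nat \<Rightarrow> (assignment \<Rightarrow> real) \<Rightarrow> nat \<Rightarrow> assignment \<Rightarrow> bool" where
  "min_stationary_optimum l f v A \<longleftrightarrow>
     stationary_optimum l f A \<and> v \<in> dom A \<and>
     (\<forall>B. stationary_optimum l f B \<and> v \<in> dom B \<longrightarrow> card (dom A) \<le> card (dom B))"

end

theory Submission
  imports Defs
begin

lemma fin_loci: "finite (loci l)" by (simp add: loci_def)

lemma fin_chroms: "finite (chroms l)"
  using finite_set_of_finite_maps[of "loci l" "UNIV::bool set"] fin_loci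
  unfolding chroms_def by simp

lemma ex_max:
  assumes "finite S" "S \<noteq> {}"
  shows "\<exists>y\<in>S. \<forall>z\<in>S. (f::_\<Rightarrow>real) z \<le> f y"
proof -
  have "Max (f ` S) \<in> f ` S" using assms by simp
  then obtain y where y: "y \<in> S" "f y = Max (f ` S)" by auto
  have "\<forall>z\<in>S. f z \<le> f y" using y assms by simp
  then show ?thesis using y by blast
qed

lemma epi_single:
  assumes nw: "no_weak_epistasis l f" and e: "epistatic l f S x"
  shows "\<exists>u\<in>S. epistatic l f {u} x"
  using e
proof (induction "card S" arbitrary: S rule: less_induct)
  case less
  have fin: "finite S" using less.prems fin_loci unfolding epistatic_def
    by (meson finite_Diff finite_subset)
  have ne: "S \<noteq> {}" using less.prems unfolding epistatic_def by blast
  show ?case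
  proof (cases "card S \<ge> 2")
    case True
    then have "\<not> weak_epistasis l f S x" using nw unfolding no_weak_epistasis_def by blast
    then obtain T where T: "T \<noteq> {}" "T \<subset> S" "epistatic l f T x"
      using True less.prems unfolding weak_epistasis_def by blast
    have "card T < card S" using T fin by (simp add: psubset_card_mono)
    then obtain u where "u \<in> T" "epistatic l f {u} x" using less.hyps T by blast
    then show ?thesis using T by blast
  next
    case False
    have "card S > 0" using fin ne by auto
    then have "card S = 1" using False by linarith
    then obtain u where "S = {u}" by (meson card_1_singletonE)
    then show ?thesis using less.prems by blast
  qed
qed

lemma Psi_empty:
  assumes g_chrom: "g \<in> chroms l"
    and g_unique_max: "\<forall>y \<in> chroms l. y \<noteq> g \<longrightarrow> f y < f g"
  shows "Psi l f Map.empty = {g}"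
  using assms unfolding Psi_def by (auto simp: less_imp_le) (meson less_imp_le not_le order_refl)

lemma Psiat_empty:
  assumes g_chrom: "g \<in> chroms l"
    and g_unique_max: "\<forall>y \<in> chroms l. y \<noteq> g \<longrightarrow> f y < f g"
  shows "Psi_at l f Map.empty x = {the (g x)}"
  using Psi_empty[OF assms] unfolding Psi_at_def by auto

lemma Psi_outside:
  assumes g_chrom: "g \<in> chroms l"
    and g_unique_max: "\<forall>y \<in> chroms l. y \<noteq> g \<longrightarrow> f y < f g"
    and nw: "no_weak_epistasis l f"
    and closed: "\<forall>u w. w \<in> C \<longrightarrow> u \<notin> C \<longrightarrow> \<not> epistatic l f {u} w"
    and x: "x \<in> C" "x \<in> loci l"
  shows "dom A \<subseteq> loci l - C \<Longrightarrow> Psi_at l f A x = {the (g x)}"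
proof (induction "card (dom A)" arbitrary: A rule: less_induct)
  case less
  show ?case
  proof (cases "dom A = {}")
    case True
    then have "A = Map.empty" by simp
    then show ?thesis using Psiat_empty[OF g_chrom g_unique_max] by simp
  next
    case False
    let ?S = "dom A"
    have fin: "finite ?S" using less.prems fin_loci by (meson finite_Diff finite_subset)
    have "\<not> epistatic l f ?S x"
    proof
      assume "epistatic l f ?S x"
      then obtain u where "u \<in> ?S" "epistatic l f {u} x" using epi_single[OF nw] by blast
      then show False using closed x less.prems by blast
    qed
    moreover have "x \<in> loci l" "?S \<subseteq> loci l - {x}" using x less.prems by auto
    ultimately obtain s where s: "s \<in> ?S"
      "\<forall>A'. dom A' = ?S \<longrightarrow> Psi_at l f A' x = Psi_at l f (A'(s := None)) x"
      using False unfolding epistatic_def by blast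
    have "card ?S > 0" using s(1) fin card_gt_0_iff by blast
    then have "card (dom (A(s := None))) < card ?S" using s(1) fin by simp
    moreover have "dom (A(s := None)) \<subseteq> loci l - C" using less.prems by auto
    ultimately have "Psi_at l f (A(s := None)) x = {the (g x)}" using less.hyps by blast
    then show ?thesis using s(2) by simp
  qed
qed

lemma Psi_max: "y \<in> Psi l f A \<Longrightarrow> z \<in> chroms l \<Longrightarrow> A \<subseteq>\<^sub>m z \<Longrightarrow> f z \<le> f y"
  unfolding Psi_def by blast

lemma Psi_intro: "y \<in> chroms l \<Longrightarrow> A \<subseteq>\<^sub>m y \<Longrightarrow> (\<And>z. z \<in> chroms l \<Longrightarrow> A \<subseteq>\<^sub>m z \<Longrightarrow> f z \<le> f y)
   \<Longrightarrow> y \<in> Psi l f A"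
  unfolding Psi_def by blast

lemma chrom_ext_le: "dom R \<inter> dom A' = {} \<Longrightarrow> R \<subseteq>\<^sub>m R ++ A'"
  unfolding map_le_def map_add_def by (auto split: option.splits)

lemma g_restr_SO:
  assumes g_chrom: "g \<in> chroms l"
    and g_unique_max: "\<forall>y \<in> chroms l. y \<noteq> g \<longrightarrow> f y < f g"
    and nw: "no_weak_epistasis l f"
    and closed: "\<forall>u w. w \<in> C \<longrightarrow> u \<notin> C \<longrightarrow> \<not> epistatic l f {u} w"
    and C: "C \<subseteq> loci l" "C \<noteq> {}"
  shows "stationary_optimum l f (g |` C)"
proof -
  have dg: "dom g = loci l" using g_chrom unfolding chroms_def by simp
  have dgC: "dom (g |` C) = C" using dg C by auto
  show ?thesis unfolding stationary_optimum_def is_assignment_def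
  proof (intro conjI allI impI)
    show "dom (g |` C) \<subseteq> loci l" using dgC C by simp
    show "dom (g |` C) \<noteq> {}" using dgC C by simp
    fix A' R :: assignment
    assume a: "A' \<noteq> g |` C \<and> dom A' = dom (g |` C) \<and> dom R = loci l - dom (g |` C)"
    then have A'd: "dom A' = C" and Rd: "dom R = loci l - C" and ne: "A' \<noteq> g |` C"
      using dgC by auto
    have Pat: "Psi_at l f R x = {the (g x)}" if xC: "x \<in> C" for x
    proof -
      have "x \<in> loci l" using xC C by auto
      then show ?thesis using Psi_outside[OF g_chrom g_unique_max nw closed xC] Rd by simp
    qed
    obtain x0 where x0: "x0 \<in> C" using C by blast
    have "Psi_at l f R x0 \<noteq> {}" using Pat[OF x0] by simp
    then obtain y0 where y0: "y0 \<in> Psi l f R" unfolding Psi_at_def by blast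
    let ?G = "R ++ g |` C"
    have yeq: "y = ?G" if y: "y \<in> Psi l f R" for y
    proof
      fix x
      have yc: "dom y = loci l" "R \<subseteq>\<^sub>m y" using y unfolding Psi_def chroms_def by auto
      show "y x = ?G x"
      proof (cases "x \<in> C")
        case True
        then have "the (y x) \<in> Psi_at l f R x" using y unfolding Psi_at_def by blast
        then have "the (y x) = the (g x)" using Pat[OF True] by simp
        moreover have "x \<in> dom y" "x \<in> dom g" using yc dg True C by auto
        ultimately have "y x = g x" by auto
        then show ?thesis using True \<open>x \<in> dom g\<close> by (auto simp: map_add_def)
      next
        case False
        then have G: "(?G) x = R x" by (simp add: map_add_def)
        have "R x = y x"
        proof (cases "x \<in> loci l")
          case True
          then show ?thesis using yc Rd False by (metis DiffI domIff map_le_def)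
        next
          case F2: False
          then have "x \<notin> dom y" "x \<notin> dom R" using yc Rd by auto
          then show ?thesis by (simp add: domIff)
        qed
        then show ?thesis using G by simp
      qed
    qed
    have GP: "?G \<in> Psi l f R" using yeq[OF y0] y0 by simp
    have "dom (R ++ A') = loci l" using A'd Rd C by auto
    then have Achrom: "R ++ A' \<in> chroms l" unfolding chroms_def by simp
    have "dom R \<inter> dom A' = {}" using A'd Rd by auto
    then have Aext: "R \<subseteq>\<^sub>m R ++ A'" by (rule chrom_ext_le)
    have le: "f (R ++ A') \<le> f ?G" using Psi_max[OF GP Achrom Aext] .
    have "f (R ++ A') \<noteq> f ?G"
    proof
      assume eq: "f (R ++ A') = f ?G"
      have "R ++ A' \<in> Psi l f R"
      proof (rule Psi_intro[OF Achrom Aext])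
        fix z assume "z \<in> chroms l" "R \<subseteq>\<^sub>m z"
        then show "f z \<le> f (R ++ A')" using Psi_max[OF GP] eq by simp
      qed
      then have "R ++ A' = ?G" by (rule yeq)
      then have "(R ++ A') |` C = ?G |` C" by simp
      moreover have "(R ++ A') |` C = A'" using A'd
        by (auto simp: fun_eq_iff restrict_map_def map_add_def split: option.splits)
      moreover have RC: "\<forall>x\<in>C. R x = None" using Rd by auto
      moreover have "?G |` C = g |` C" using RC
        by (auto simp: fun_eq_iff restrict_map_def map_add_def split: option.splits)
      ultimately show False using ne by simp
    qed
    then show "f (R ++ A') < f (R ++ g |` C)" using le by simp
  qed
qed

lemma split_map: "dom y = L \<Longrightarrow> D \<subseteq> L \<Longrightarrow> y |` (L - D) ++ y |` D = y"
  by (rule ext) (auto simp: map_add_def restrict_map_def domIff split: option.splits)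

lemma SO_use: "stationary_optimum l f A \<Longrightarrow> A' \<noteq> A \<Longrightarrow> dom A' = dom A \<Longrightarrow> dom R = loci l - dom A
   \<Longrightarrow> f (R ++ A') < f (R ++ A)"
  unfolding stationary_optimum_def by blast

lemma SO_eq_g:
  assumes g_chrom: "g \<in> chroms l"
    and g_unique_max: "\<forall>y \<in> chroms l. y \<noteq> g \<longrightarrow> f y < f g"
    and SO: "stationary_optimum l f A"
  shows "A = g |` dom A"
proof (rule ccontr)
  assume ne: "A \<noteq> g |` dom A"
  have dg: "dom g = loci l" using g_chrom unfolding chroms_def by simp
  have dA: "dom A \<subseteq> loci l" using SO unfolding stationary_optimum_def is_assignment_def by blast
  let ?R = "g |` (loci l - dom A)"
  let ?A' = "g |` dom A"
  have d1: "dom ?A' = dom A" using dg dA by auto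
  have d2: "dom ?R = loci l - dom A" using dg by auto
  have lt: "f (?R ++ ?A') < f (?R ++ A)"
    using SO_use[OF SO _ d1 d2] ne by metis
  have "?R ++ ?A' = g" using split_map[OF dg dA] .
  moreover have "dom (?R ++ A) = loci l" using d2 dA by auto
  then have "?R ++ A \<in> chroms l" unfolding chroms_def by simp
  then have "f (?R ++ A) \<le> f g" using g_unique_max by (cases "?R ++ A = g") (auto simp: less_imp_le)
  ultimately show False using lt by simp
qed

lemma SO_closed:
  assumes g_chrom: "g \<in> chroms l"
    and g_unique_max: "\<forall>y \<in> chroms l. y \<noteq> g \<longrightarrow> f y < f g"
    and SO: "stationary_optimum l f A"
    and w: "w \<in> dom A" and u: "u \<notin> dom A" and e: "epistatic l f {u} w"
  shows False
proof -
  let ?D = "dom A"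
  have Ag: "A = g |` ?D" using SO_eq_g[OF g_chrom g_unique_max SO] .
  have dg: "dom g = loci l" using g_chrom unfolding chroms_def by simp
  have dA: "?D \<subseteq> loci l" using SO unfolding stationary_optimum_def is_assignment_def by blast
  have uw: "u \<in> loci l" "w \<in> loci l" using e unfolding epistatic_def by auto
  obtain B where B: "dom B = {u}" "Psi_at l f B w \<noteq> Psi_at l f (B(u := None)) w"
    using e unfolding epistatic_def by blast
  have "B(u := None) = Map.empty"
  proof
    fix x show "(B(u := None)) x = None" using B(1) by (cases "x = u") (auto simp: domIff)
  qed
  then have Bne: "Psi_at l f B w \<noteq> {the (g w)}" using B(2) Psiat_empty[OF g_chrom g_unique_max] by simp
  have allw: "y w = g w" if y: "y \<in> Psi l f B" for y
  proof -
    have yc: "y \<in> chroms l" "B \<subseteq>\<^sub>m y" using y unfolding Psi_def by auto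
    have dy: "dom y = loci l" using yc unfolding chroms_def by simp
    let ?R = "y |` (loci l - ?D)"
    have dR: "dom ?R = loci l - ?D" using dy by auto
    have ysplit: "y = ?R ++ y |` ?D" using sym[OF split_map[OF dy dA]] .
    have dyD: "dom (y |` ?D) = ?D" using dy dA by auto
    have eqA: "y |` ?D = A"
    proof (rule ccontr)
      assume ne: "y |` ?D \<noteq> A"
      have lt: "f (?R ++ y |` ?D) < f (?R ++ A)"
        using SO_use[OF SO ne dyD dR] .
      have "dom (?R ++ A) = loci l" using dR dA by auto
      then have c: "?R ++ A \<in> chroms l" unfolding chroms_def by simp
      have "B \<subseteq>\<^sub>m ?R ++ A"
        unfolding map_le_def
      proof
        fix x assume "x \<in> dom B"
        then have xu: "x = u" using B(1) by simp
        have "B u = y u" using yc(2) B(1) unfolding map_le_def by simp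
        moreover have "(?R ++ A) u = y u" using u uw by (auto simp: map_add_def domIff)
        ultimately show "B x = (?R ++ A) x" using xu by simp
      qed
      then have "f (?R ++ A) \<le> f y" using Psi_max[OF y c] by simp
      moreover have "f y = f (?R ++ y |` ?D)" using ysplit by (rule arg_cong)
      ultimately show False using lt by linarith
    qed
    have "(y |` ?D) w = y w" using w by simp
    then show ?thesis using eqA Ag w by (metis restrict_in)
  qed
  let ?S = "{z \<in> chroms l. B \<subseteq>\<^sub>m z}"
  have "dom (g ++ B) = loci l" using dg B(1) uw by auto
  then have "g ++ B \<in> ?S" unfolding chroms_def by (simp add: map_le_map_add)
  then have "?S \<noteq> {}" by blast
  moreover have "finite ?S" using fin_chroms by simp
  ultimately obtain y where y: "y \<in> ?S" "\<forall>z\<in>?S. f z \<le> f y" using ex_max[of ?S f] by blast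
  have yP: "y \<in> Psi l f B" using y by (intro Psi_intro) auto
  have "Psi_at l f B w = {the (g w)}"
  proof
    show "Psi_at l f B w \<subseteq> {the (g w)}" unfolding Psi_at_def using allw by auto
    show "{the (g w)} \<subseteq> Psi_at l f B w" unfolding Psi_at_def using allw[OF yP] yP by (auto intro!: exI[of _ y])
  qed
  then show False using Bne by simp
qed

lemma epi_loci: "epistatic l f {u} w \<Longrightarrow> u \<in> loci l"
  unfolding epistatic_def by blast

lemma IN_loci: "v \<in> loci l \<Longrightarrow> IN l f i v \<subseteq> loci l"
  by (induction i) (auto dest: epi_loci)

definition Ucum :: "nat \<Rightarrow> (assignment \<Rightarrow> real) \<Rightarrow> nat \<Rightarrow> nat \<Rightarrow> nat set" where
  "Ucum l f v k = (\<Union>i<k. IN l f i v)"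

lemma Ucum_Suc: "Ucum l f v (Suc k) = {v} \<union> {u. \<exists>w\<in>Ucum l f v k. epistatic l f {u} w}"
proof
  show "Ucum l f v (Suc k) \<subseteq> {v} \<union> {u. \<exists>w\<in>Ucum l f v k. epistatic l f {u} w}"
  proof
    fix x assume "x \<in> Ucum l f v (Suc k)"
    then obtain i where i: "i < Suc k" "x \<in> IN l f i v" unfolding Ucum_def by blast
    show "x \<in> {v} \<union> {u. \<exists>w\<in>Ucum l f v k. epistatic l f {u} w}"
    proof (cases i)
      case 0 then show ?thesis using i by simp
    next
      case (Suc j)
      then have "j < k" using i by simp
      then show ?thesis using i Suc unfolding Ucum_def by auto
    qed
  qed
  show "{v} \<union> {u. \<exists>w\<in>Ucum l f v k. epistatic l f {u} w} \<subseteq> Ucum l f v (Suc k)"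
  proof
    fix x assume x: "x \<in> {v} \<union> {u. \<exists>w\<in>Ucum l f v k. epistatic l f {u} w}"
    show "x \<in> Ucum l f v (Suc k)"
    proof (cases "x = v")
      case True
      have "v \<in> IN l f 0 v" by simp
      then show ?thesis using True unfolding Ucum_def by blast
    next
      case False
      then obtain w i where "i < k" "w \<in> IN l f i v" "epistatic l f {x} w"
        using x unfolding Ucum_def by blast
      then have "x \<in> IN l f (Suc i) v" "Suc i < Suc k" by auto
      then show ?thesis unfolding Ucum_def by blast
    qed
  qed
qed

lemma Ucum_stable: "Ucum l f v k = Ucum l f v (Suc k) \<Longrightarrow> Ucum l f v (k + j) = Ucum l f v k"
proof (induction j)
  case 0 then show ?case by simp
next
  case (Suc j)
  have "Ucum l f v (k + Suc j) = Ucum l f v (Suc (k + j))" by simp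
  also have "\<dots> = {v} \<union> {u. \<exists>w\<in>Ucum l f v (k + j). epistatic l f {u} w}" by (rule Ucum_Suc)
  also have "\<dots> = {v} \<union> {u. \<exists>w\<in>Ucum l f v k. epistatic l f {u} w}" using Suc by simp
  also have "\<dots> = Ucum l f v (Suc k)" by (rule Ucum_Suc[symmetric])
  finally show ?case using Suc.prems by simp
qed

lemma Ucum_mono: "a \<le> b \<Longrightarrow> Ucum l f v a \<subseteq> Ucum l f v b"
  unfolding Ucum_def by (rule UN_mono) auto

lemma Ucum_loci: "v \<in> loci l \<Longrightarrow> Ucum l f v k \<subseteq> loci l"
  unfolding Ucum_def using IN_loci by blast

lemma Ucum_pigeon:
  assumes v: "v \<in> loci l"
  shows "\<exists>k\<le>l. Ucum l f v k = Ucum l f v (Suc k)"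
proof (rule ccontr)
  assume "\<not> ?thesis"
  then have ps: "\<And>k. k \<le> l \<Longrightarrow> Ucum l f v k \<subset> Ucum l f v (Suc k)"
    using Ucum_mono[of _ "Suc _"] by (metis le_SucI order_refl psubsetI)
  have fin: "\<And>k. finite (Ucum l f v k)" using Ucum_loci[OF v] fin_loci finite_subset by metis
  have "k \<le> Suc l \<Longrightarrow> k \<le> card (Ucum l f v k)" for k
  proof (induction k)
    case 0 then show ?case by simp
  next
    case (Suc k)
    then have "k \<le> l" by simp
    then have "card (Ucum l f v k) < card (Ucum l f v (Suc k))"
      using psubset_card_mono[OF fin ps] by blast
    then show ?case using Suc by simp
  qed
  then have "Suc l \<le> card (Ucum l f v (Suc l))" by simp
  moreover have "card (Ucum l f v (Suc l)) \<le> card (loci l)"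
    using Ucum_loci[OF v] fin_loci by (rule card_mono[rotated])
  ultimately show False by (simp add: loci_def)
qed

lemma IN_in_star:
  assumes v: "v \<in> loci l"
  shows "IN l f i v \<subseteq> IN_star l f v"
proof -
  have star: "IN_star l f v = Ucum l f v l" unfolding IN_star_def Ucum_def by simp
  have "IN l f i v \<subseteq> Ucum l f v (Suc i)" unfolding Ucum_def by blast
  moreover have "Ucum l f v (Suc i) \<subseteq> Ucum l f v l"
  proof (cases "Suc i \<le> l")
    case True then show ?thesis by (rule Ucum_mono)
  next
    case False
    obtain k where k: "k \<le> l" "Ucum l f v k = Ucum l f v (Suc k)" using Ucum_pigeon[OF v] by blast
    have "Ucum l f v (Suc i) = Ucum l f v (k + (Suc i - k))" using k False by simp
    also have "\<dots> = Ucum l f v k" using Ucum_stable[OF k(2)] .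
    finally show ?thesis using Ucum_mono[OF k(1)] by simp
  qed
  ultimately show ?thesis using star by simp
qed

lemma star_closed:
  assumes v: "v \<in> loci l" and w: "w \<in> IN_star l f v" and e: "epistatic l f {u} w"
  shows "u \<in> IN_star l f v"
proof -
  obtain i where "w \<in> IN l f i v" using w unfolding IN_star_def by blast
  then have "u \<in> IN l f (Suc i) v" using e by auto
  then show ?thesis using IN_in_star[OF v] by blast
qed

theorem theorem1:
  fixes l :: nat and f :: "assignment \<Rightarrow> real" and g :: assignment
  assumes "l \<ge> 1"
    and g_chrom: "g \<in> chroms l"
    and g_unique_max: "\<forall>y \<in> chroms l. y \<noteq> g \<longrightarrow> f y < f g"
    and no_weak: "no_weak_epistasis l f"
  shows "\<forall>v \<in> loci l.
           (\<forall>A. min_stationary_optimum l f v A \<longrightarrow> dom A = IN_star l f v) \<and>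
           (\<forall>A. min_stationary_optimum l f v A \<longleftrightarrow> A = g |` IN_star l f v)"
proof
  fix v assume v: "v \<in> loci l"
  let ?C = "IN_star l f v"
  have dg: "dom g = loci l" using g_chrom unfolding chroms_def by simp
  have Cl: "?C \<subseteq> loci l" unfolding IN_star_def using IN_loci[OF v] by blast
  have vC: "v \<in> ?C" unfolding IN_star_def using assms(1) by (intro UN_I[of 0]) auto
  have closed: "\<forall>u w. w \<in> ?C \<longrightarrow> u \<notin> ?C \<longrightarrow> \<not> epistatic l f {u} w"
    using star_closed[OF v] by blast
  have GSO: "stationary_optimum l f (g |` ?C)"
    using g_restr_SO[OF g_chrom g_unique_max no_weak closed Cl] vC by blast
  have dG: "dom (g |` ?C) = ?C" using dg Cl by auto
  have contain: "?C \<subseteq> dom B" if SO: "stationary_optimum l f B" and vB: "v \<in> dom B" for B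
  proof -
    have "IN l f i v \<subseteq> dom B" for i
    proof (induction i)
      case 0 then show ?case using vB by simp
    next
      case (Suc i)
      show ?case
      proof
        fix u assume "u \<in> IN l f (Suc i) v"
        then obtain w where "w \<in> IN l f i v" "epistatic l f {u} w" by auto
        then show "u \<in> dom B" using Suc SO_closed[OF g_chrom g_unique_max SO] by blast
      qed
    qed
    then show ?thesis unfolding IN_star_def by blast
  qed
  have finB: "finite (dom B)" if "stationary_optimum l f B" for B
    using that fin_loci unfolding stationary_optimum_def is_assignment_def by (meson finite_subset)
  have GM: "min_stationary_optimum l f v (g |` ?C)"
    unfolding min_stationary_optimum_def
  proof (intro conjI allI impI)
    show "stationary_optimum l f (g |` ?C)" by (rule GSO)
    show "v \<in> dom (g |` ?C)" using dG vC by simp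
    fix B assume B: "stationary_optimum l f B \<and> v \<in> dom B"
    then show "card (dom (g |` ?C)) \<le> card (dom B)"
      using contain[of B] finB[of B] dG by (simp add: card_mono)
  qed
  have Mdom: "dom A = ?C" if M: "min_stationary_optimum l f v A" for A
  proof -
    have SO: "stationary_optimum l f A" "v \<in> dom A" using M unfolding min_stationary_optimum_def by auto
    have "\<forall>B. stationary_optimum l f B \<and> v \<in> dom B \<longrightarrow> card (dom A) \<le> card (dom B)"
      using M unfolding min_stationary_optimum_def by blast
    moreover have "stationary_optimum l f (g |` ?C) \<and> v \<in> dom (g |` ?C)" using GSO vC dG by simp
    ultimately have "card (dom A) \<le> card (dom (g |` ?C))" by blast
    then have "card (dom A) \<le> card ?C" using dG by simp
    moreover have "?C \<subseteq> dom A" using contain[OF SO] .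
    moreover have "finite (dom A)" using finB[OF SO(1)] .
    ultimately show ?thesis by (metis card_seteq)
  qed
  show "(\<forall>A. min_stationary_optimum l f v A \<longrightarrow> dom A = ?C) \<and>
        (\<forall>A. min_stationary_optimum l f v A \<longleftrightarrow> A = g |` ?C)"
  proof (intro conjI allI iffI impI)
    fix A assume "min_stationary_optimum l f v A"
    then show "dom A = ?C" by (rule Mdom)
  next
    fix A assume M: "min_stationary_optimum l f v A"
    have "stationary_optimum l f A" using M unfolding min_stationary_optimum_def by auto
    then have "A = g |` dom A" by (rule SO_eq_g[OF g_chrom g_unique_max])
    then show "A = g |` ?C" using Mdom[OF M] by simp
  next
    fix A assume "A = g |` ?C"
    then show "min_stationary_optimum l f v A" using GM by simp
  qed
qed

end
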